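(* Let $F$ be a positive integer, $p\ge 1$, and $n_1<n_2<\cdots<n_p<F$ positive integers with $\gcd\{n_1,\dots,n_p\}\nmid F$. Then $\{n_1,\dots,n_p\}$ is the minimal $\mathrm{Sat}(F)$-system of generators of $\mathrm{Sat}(F)[\{n_1,\dots,n_p\}]$ if and only if $\gcd\{n_1,\dots,n_i\}\neq\gcd\{n_1,\dots,n_{i+1}\}$ for all $i\in\{1,\dots,p-1\}$.
   Context: A numerical semigroup is a subset $S\subseteq\mathbb{N}$ closed under addition, containing $0$, with $\mathbb{N}\setminus S$ finite; its Frobenius number $\mathrm{F}(S)$ is the largest integer not in $S$. For $A\subseteq\mathbb{N}$ and $a\in A$, let $\mathrm{d}_A(a)=\gcd\{x\in A\mid x\le a\}$. A numerical semigroup $S$ is saturated if $s+\mathrm{d}_S(s)\in S$ for all $s\in S\setminus\{0\}$. For a positive integer $F$, $\mathrm{Sat}(F)$ denotes the set of all saturated numerical semigroups $S$ with $\mathrm{F}(S)=F$. Let $\Delta(F+1)=\{0\}\cup\{x\in\mathbb{N}\mid x\ge F+1\}$. A set $X\subseteq\mathbb{N}$ is a $\mathrm{Sat}(F)$-set if $X\cap\Delta(F+1)=\emptyset$ and there exists $S\in\mathrm{Sat}(F)$ with $X\subseteq S$. For a $\mathrm{Sat}(F)$-set $X$, $\mathrm{Sat}(F)[X]$ denotes the intersection of all elements of $\mathrm{Sat}(F)$ containing $X$ (the smallest element of $\mathrm{Sat}(F)$ containing $X$). If $S=\mathrm{Sat}(F)[X]$, $X$ is a $\mathrm{Sat}(F)$-system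 of generators of $S$; it is minimal if $S\neq\mathrm{Sat}(F)[Y]$ for every proper subset $Y\subsetneq X$. Every $S\in\mathrm{Sat}(F)$ has a unique minimal $\mathrm{Sat}(F)$-system of generators. *)

theory Defs
  imports Main
begin

definition numerical_semigroup :: "nat set \<Rightarrow> bool" where
  "numerical_semigroup S \<longleftrightarrow> 0 \<in> S \<and> (\<forall>a\<in>S. \<forall>b\<in>S. a + b \<in> S) \<and> finite (UNIV - S)"

definition is_frobenius :: "nat set \<Rightarrow> nat \<Rightarrow> bool" where
  "is_frobenius S F \<longleftrightarrow> F \<notin> S \<and> (\<forall>x. F < x \<longrightarrow> x \<in> S)"

definition dA :: "nat set \<Rightarrow> nat \<Rightarrow> nat" where
  "dA A a = Gcd {x \<in> A. x \<le> a}"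

definition saturated :: "nat set \<Rightarrow> bool" where
  "saturated S \<longleftrightarrow> numerical_semigroup S \<and> (\<forall>s \<in> S - {0}. s + dA S s \<in> S)"

definition Sat :: "nat \<Rightarrow> nat set set" where
  "Sat F = {S. saturated S \<and> is_frobenius S F}"

definition Delta :: "nat \<Rightarrow> nat set" where
  "Delta m = {0} \<union> {x. m \<le> x}"

definition SatSet :: "nat \<Rightarrow> nat set \<Rightarrow> bool" where
  "SatSet F X \<longleftrightarrow> X \<inter> Delta (F + 1) = {} \<and> (\<exists>S \<in> Sat F. X \<subseteq> S)"

definition SatHull :: "nat \<Rightarrow> nat set \<Rightarrow> nat set" where
  "SatHull F X = \<Inter> {S \<in> Sat F. X \<subseteq> S}"

definition min_Sat_system :: "nat \<Rightarrow> nat set \<Rightarrow> nat set \<Rightarrow> bool" where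
  "min_Sat_system F X S \<longleftrightarrow> SatSet F X \<and> SatHull F X = S \<and>
     (\<forall>Y. Y \<subset> X \<longrightarrow> SatHull F Y \<noteq> S)"

end

theory Submission
  imports Defs
begin

lemma Gcd_sub: "(A::nat set) \<subseteq> B \<Longrightarrow> Gcd B dvd Gcd A"
  by (meson Gcd_dvd Gcd_greatest dvd_Gcd_iff subsetD)

lemma dA_mono: "s \<le> s' \<Longrightarrow> dA S s' dvd dA S s"
  unfolding dA_def by (rule Gcd_sub) auto

lemma sat_reach:
  assumes sat: "saturated S" and s: "s \<in> S" "0 < s"
  shows "dA S s dvd t \<Longrightarrow> s \<le> t \<Longrightarrow> t \<in> S"
  using s
proof (induction "t - s" arbitrary: s rule: less_induct)
  case less
  show ?case
  proof (cases "s = t")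
    case True then show ?thesis using less by simp
  next
    case False
    have d1: "dA S s dvd s" unfolding dA_def using less by (auto intro: Gcd_dvd)
    have d0: "dA S s \<noteq> 0" using d1 less by (metis dvd_0_left_iff not_less0)
    have ss: "s + dA S s \<in> S" using sat less unfolding saturated_def by auto
    have le: "s + dA S s \<le> t"
    proof -
      obtain a where a: "s = dA S s * a" using d1 by blast
      obtain b where b: "t = dA S s * b" using less by blast
      have "a < b" using a b False less d0 by (metis le_neq_implies_less mult_le_cancel1 not_less)
      hence "a + 1 \<le> b" by simp
      hence "dA S s * (a+1) \<le> dA S s * b" by (rule mult_le_mono2)
      thus ?thesis using a b by (simp add: algebra_simps)
    qed
    have "dA S (s + dA S s) dvd t" using dA_mono[of s "s + dA S s" S] less dvd_trans by auto
    moreover have "t - (s + dA S s) < t - s" using le d0 by simp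
    ultimately show ?thesis using less(1)[of "s + dA S s"] le ss d0 less by auto
  qed
qed

lemma mono_n:
  assumes "\<And>i. 1 \<le> i \<Longrightarrow> i < p \<Longrightarrow> (n::nat\<Rightarrow>nat) i < n (Suc i)"
  shows "1 \<le> i \<Longrightarrow> i < k \<Longrightarrow> k \<le> p \<Longrightarrow> n i < n k"
proof (induction k)
  case 0 then show ?case by simp
next
  case (Suc k)
  show ?case
  proof (cases "i = k")
    case True then show ?thesis using assms Suc by simp
  next
    case False
    hence "n i < n k" using Suc by simp
    also have "n k < n (Suc k)" using assms Suc by simp
    finally show ?thesis .
  qed
qed

definition Sj :: "nat \<Rightarrow> nat \<Rightarrow> (nat \<Rightarrow> nat) \<Rightarrow> nat \<Rightarrow> nat set" where
  "Sj F p n j = {0} \<union> {x. F < x} \<union> {x. \<exists>i\<in>{1..p}. i \<noteq> j \<and> n i \<le> x \<and> Gcd (n`{1..i}) dvd x}"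

lemma memSj: "x \<in> Sj F p n j \<longleftrightarrow> x = 0 \<or> F < x \<or> (\<exists>i\<in>{1..p}. i \<noteq> j \<and> n i \<le> x \<and> Gcd (n`{1..i}) dvd x)"
  by (simp add: Sj_def)

lemma nSj: "k \<in> {1..p} \<Longrightarrow> k \<noteq> j \<Longrightarrow> n k \<in> Sj F p n j"
proof -
  assume k: "k \<in> {1..p}" "k \<noteq> j"
  have "Gcd (n`{1..k}) dvd n k" by (rule Gcd_dvd) (use k in auto)
  thus ?thesis unfolding memSj using k by blast
qed

lemma dd: "k \<le> i \<Longrightarrow> Gcd ((n::nat\<Rightarrow>nat)`{1..i}) dvd Gcd (n`{1..k})"
  by (rule Gcd_sub) auto

lemma Sj_Sat:
  assumes mono: "\<And>i. 1 \<le> i \<Longrightarrow> i < p \<Longrightarrow> n i < n (Suc i)"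
    and nd: "\<not> Gcd (n ` {1..p}) dvd F"
  shows "Sj F p n j \<in> Sat F"
proof -
  let ?S = "Sj F p n j"
  let ?d = "\<lambda>i. Gcd (n`{1..i})"
  have ns: "numerical_semigroup ?S"
    unfolding numerical_semigroup_def
  proof (intro conjI ballI)
    show "0 \<in> ?S" by (simp add: Sj_def)
    show "finite (UNIV - ?S)"
      by (rule finite_subset[of _ "{..F}"]) (auto simp: Sj_def)
  next
    fix a b assume a: "a \<in> ?S" and b: "b \<in> ?S"
    show "a + b \<in> ?S"
    proof (cases "a = 0 \<or> b = 0 \<or> F < a \<or> F < b")
      case True then show ?thesis using a b by (auto simp: Sj_def)
    next
      case False
      then obtain i k where i: "i\<in>{1..p}" "i \<noteq> j" "n i \<le> a" "?d i dvd a"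
        and k: "k\<in>{1..p}" "k \<noteq> j" "n k \<le> b" "?d k dvd b"
        using a b by (auto simp: Sj_def)
      show ?thesis
      proof (cases "i \<le> k")
        case True
        have "?d k dvd a" using dd[OF True, of n] i dvd_trans by blast
        hence "?d k dvd a + b" using k by simp
        thus ?thesis using k unfolding Sj_def by force
      next
        case False
        have "?d i dvd b" using dd[of k i n] False k dvd_trans by auto
        hence "?d i dvd a + b" using i by simp
        thus ?thesis using i unfolding Sj_def by force
      qed
    qed
  qed
  have sat: "\<forall>s\<in>?S - {0}. s + dA ?S s \<in> ?S"
  proof
    fix s assume s: "s \<in> ?S - {0}"
    show "s + dA ?S s \<in> ?S"
    proof (cases "F < s")
      case True then show ?thesis by (simp add: Sj_def)
    next
      case False
      let ?I = "{i\<in>{1..p}. i \<noteq> j \<and> n i \<le> s}"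
      obtain i0 where i0: "i0\<in>{1..p}" "i0 \<noteq> j" "n i0 \<le> s" "?d i0 dvd s"
        using s False by (auto simp: Sj_def)
      have fin: "finite ?I" by simp
      have ne: "i0 \<in> ?I" using i0 by simp
      define m where "m = Max ?I"
      have mI: "m \<in> ?I" unfolding m_def using fin ne Max_in by blast
      have mmax: "\<And>k. k \<in> ?I \<Longrightarrow> k \<le> m" unfolding m_def using fin by simp
      have all: "\<forall>y\<in>{x \<in> ?S. x \<le> s}. ?d m dvd y"
      proof
        fix y assume y: "y \<in> {x \<in> ?S. x \<le> s}"
        show "?d m dvd y"
        proof (cases "y = 0")
          case True then show ?thesis by simp
        next
          case False
          then obtain k where k: "k\<in>{1..p}" "k \<noteq> j" "n k \<le> y" "?d k dvd y"
            using y \<open>\<not> F < s\<close> by (auto simp: Sj_def)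
          have "k \<le> m" using mmax k y by auto
          thus ?thesis using dd[of k m n] k dvd_trans by blast
        qed
      qed
      hence "?d m dvd dA ?S s" unfolding dA_def by (simp add: dvd_Gcd_iff)
      moreover have "?d m dvd s" using all s by auto
      ultimately have "?d m dvd s + dA ?S s" by simp
      moreover have "n m \<le> s + dA ?S s" using mI by auto
      ultimately show ?thesis using mI unfolding Sj_def by force
    qed
  qed
  have fr: "is_frobenius ?S F"
    unfolding is_frobenius_def
  proof (intro conjI allI impI)
    show "F \<notin> ?S"
    proof
      assume "F \<in> ?S"
      then obtain i where i: "i\<in>{1..p}" "?d i dvd F" using nd by (auto simp: Sj_def)
      thus False using dd[of i p n] nd dvd_trans by auto
    qed
  qed (simp add: Sj_def)
  show ?thesis using ns sat fr unfolding Sat_def saturated_def by simp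
qed

theorem proposition44:
  fixes F p :: nat and n :: "nat \<Rightarrow> nat"
  assumes "0 < F" and "1 \<le> p"
    and "0 < n 1"
    and "\<And>i. 1 \<le> i \<Longrightarrow> i < p \<Longrightarrow> n i < n (Suc i)"
    and "n p < F"
    and "\<not> Gcd (n ` {1..p}) dvd F"
  shows "min_Sat_system F (n ` {1..p}) (SatHull F (n ` {1..p})) \<longleftrightarrow>
         (\<forall>i \<in> {1..<p}. Gcd (n ` {1..i}) \<noteq> Gcd (n ` {1..Suc i}))"
proof -
  let ?X = "n ` {1..p}"
  let ?d = "\<lambda>i. Gcd (n`{1..i})"
  have lt: "\<And>i k. 1 \<le> i \<Longrightarrow> i < k \<Longrightarrow> k \<le> p \<Longrightarrow> n i < n k"
    using mono_n[of p n, OF assms(4)] by blast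
  have le: "n i \<le> n k" if "1 \<le> i" "i \<le> k" "k \<le> p" for i k
    using lt[of i k] that by (cases "i = k") auto
  have pos: "0 < n i" if "i \<in> {1..p}" for i
    using le[of 1 i] assms(3) that by auto
  have hullX: "?X \<subseteq> SatHull F ?X" unfolding SatHull_def by auto
  show ?thesis
  proof
    assume min: "min_Sat_system F ?X (SatHull F ?X)"
    show "\<forall>i \<in> {1..<p}. ?d i \<noteq> ?d (Suc i)"
    proof (rule ccontr)
      assume "\<not> ?thesis"
      then obtain i where i: "i \<in> {1..<p}" "?d i = ?d (Suc i)" by auto
      let ?Y = "?X - {n (Suc i)}"
      have inX: "n (Suc i) \<in> ?X" using i by auto
      have sub: "?Y \<subset> ?X" using inX by auto
      have "{S \<in> Sat F. ?Y \<subseteq> S} = {S \<in> Sat F. ?X \<subseteq> S}"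
      proof (intro set_eqI iffI)
        fix S assume S: "S \<in> {S \<in> Sat F. ?Y \<subseteq> S}"
        have sat: "saturated S" using S by (simp add: Sat_def)
        have ni: "n i \<in> S" using S i lt[of i "Suc i"] by force
        have "n`{1..i} \<subseteq> {x\<in>S. x \<le> n i}"
        proof
          fix x assume "x \<in> n`{1..i}"
          then obtain k where k: "k\<in>{1..i}" "x = n k" by auto
          have "n k < n (Suc i)" using lt[of k "Suc i"] k i by auto
          hence "x \<in> ?Y" using k i by auto
          thus "x \<in> {x\<in>S. x \<le> n i}" using S k le[of k i] i by auto
        qed
        hence "dA S (n i) dvd ?d i" unfolding dA_def by (rule Gcd_sub)
        also have "?d i dvd n (Suc i)"
        proof -
          have "n (Suc i) \<in> n`{1..Suc i}" by auto
          hence "?d (Suc i) dvd n (Suc i)" by (rule Gcd_dvd)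
          thus ?thesis using i(2) by simp
        qed
        finally have "n (Suc i) \<in> S"
          using sat_reach[OF sat ni pos[of i]] i lt[of i "Suc i"] by auto
        thus "S \<in> {S \<in> Sat F. ?X \<subseteq> S}" using S by auto
      qed auto
      hence "SatHull F ?Y = SatHull F ?X" unfolding SatHull_def by simp
      thus False using min sub unfolding min_Sat_system_def by blast
    qed
  next
    assume H: "\<forall>i \<in> {1..<p}. ?d i \<noteq> ?d (Suc i)"
    have S0: "Sj F p n 0 \<in> Sat F" by (rule Sj_Sat[OF assms(4) assms(6)])
    have XS0: "?X \<subseteq> Sj F p n 0"
    proof
      fix x assume "x \<in> ?X"
      then obtain k where k: "k \<in> {1..p}" "x = n k" by blast
      show "x \<in> Sj F p n 0" using nSj[of k p 0 n F] k by auto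
    qed
    have "?X \<inter> Delta (F + 1) = {}"
    proof (rule equals0I)
      fix x assume x: "x \<in> ?X \<inter> Delta (F + 1)"
      then obtain k where k: "k \<in> {1..p}" "x = n k" by blast
      have "0 < x" "x < F + 1" using pos[OF k(1)] le[of k p] k assms(5) by auto
      thus False using x unfolding Delta_def by auto
    qed
    hence ss: "SatSet F ?X" unfolding SatSet_def using S0 XS0 by blast
    have key: "\<And>j. j \<in> {1..p} \<Longrightarrow> n j \<notin> Sj F p n j"
    proof
      fix j assume j: "j \<in> {1..p}" and inS: "n j \<in> Sj F p n j"
      have "n j \<noteq> 0" "\<not> F < n j" using pos[OF j] le[of j p] j assms(5) by auto
      hence "\<exists>i\<in>{1..p}. i \<noteq> j \<and> n i \<le> n j \<and> ?d i dvd n j"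
        using inS[unfolded memSj] by simp
      then obtain i where i: "i\<in>{1..p}" "i \<noteq> j" "n i \<le> n j" "?d i dvd n j"
        by blast
      have ij: "i < j"
      proof (rule ccontr)
        assume "\<not> i < j"
        hence "j < i" using i by auto
        thus False using lt[of j i] i j by auto
      qed
      have "?d (j - 1) dvd ?d i" using ij by (intro dd) auto
      hence dv: "?d (j - 1) dvd n j" using i dvd_trans by blast
      have jj: "{1..j} = insert j {1..j-1}" using ij by auto
      have "?d j = gcd (n j) (?d (j-1))" by (subst jj) simp
      also have "\<dots> = ?d (j-1)" using dv by (simp add: gcd_nat.absorb2)
      finally have "?d (j-1) = ?d (Suc (j-1))" using ij by simp
      moreover have "j - 1 \<in> {1..<p}" using ij i j by auto
      ultimately show False using H by blast
    qed
    have "\<forall>Y. Y \<subset> ?X \<longrightarrow> SatHull F Y \<noteq> SatHull F ?X"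
    proof (intro allI impI)
      fix Y assume Y: "Y \<subset> ?X"
      then obtain j where j: "j \<in> {1..p}" "n j \<notin> Y" by blast
      have YS: "Y \<subseteq> Sj F p n j"
      proof
        fix y assume y: "y \<in> Y"
        then obtain k where k: "k \<in> {1..p}" "y = n k" using Y by blast
        have "k \<noteq> j" using k y j by auto
        thus "y \<in> Sj F p n j" using nSj[of k p j n F] k by auto
      qed
      have "SatHull F Y \<subseteq> Sj F p n j"
        unfolding SatHull_def using Sj_Sat[OF assms(4) assms(6)] YS by blast
      hence "n j \<notin> SatHull F Y" using key[OF j(1)] by blast
      moreover have "n j \<in> SatHull F ?X" using hullX j by blast
      ultimately show "SatHull F Y \<noteq> SatHull F ?X" by blast
    qed
    thus "min_Sat_system F ?X (SatHull F ?X)" using ss unfolding min_Sat_system_def by simp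
  qed
qed

end
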